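(* Fix a real number $\beta>-1$. Let $\phi$ be an analytic self-map of $\mathbb{D}$ whose Denjoy–Wolff point $\omega$ lies on the unit circle $\mathbb{T}$. If $\lambda$ is an eigenvalue of the composition operator $C_\phi:A^2_\beta\to A^2_\beta$, $C_\phi f=f\circ\phi$, having a cyclic function as a corresponding eigenvector, then $C_\phi-\lambda I$ has dense range in $A^2_\beta$.
   Context: $\mathbb{D}$ is the open unit disc and $\mathbb{T}$ the unit circle. For $\beta>-1$, $A^2_\beta$ is the Hilbert space of analytic functions $f(z)=\sum_{n\ge0}\widehat f(n)z^n$ on $\mathbb{D}$ with inner product $\langle f,g\rangle=\sum_{n\ge0}\frac{n!\,\Gamma(2+\beta)}{\Gamma(n+2+\beta)}\widehat f(n)\overline{\widehat g(n)}$ (equivalently the $L^2$ inner product with respect to $(\beta+1)(1-|z|^2)^\beta dA(z)$, $dA$ normalized area measure); every composition operator $C_\phi$ with $\phi$ an analytic self-map of $\mathbb{D}$ is bounded on it. A function $f\in A^2_\beta$ is cyclic if its polynomial multiples $\{pf\}$ are dense in $A^2_\beta$. If an analytic self-map $\phi$ of $\mathbb{D}$ is not an elliptic automorphism (an automorphism of $\mathbb{D}$ with a fixed point in $\mathbb{D}$), there is a unique $\omega\in\overline{\mathbb{D}}$ with $\lim_{n\to\infty}\phi^{[n]}(z)=\omega$ for all $z\in\mathbb{D}$, where $\phi^{[n]}$ is the $n$-th iterate; $\omega$ is the Denjoy–Wolff point of $\phi$. *)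

theory Defs
  imports "HOL-Analysis.Analysis" "HOL-Computational_Algebra.Polynomial"
begin

definition taylor_coeff :: "(complex \<Rightarrow> complex) \<Rightarrow> nat \<Rightarrow> complex" where
  "taylor_coeff f n = (deriv ^^ n) f 0 / of_nat (fact n)"

definition bergman_weight :: "real \<Rightarrow> nat \<Rightarrow> real" where
  "bergman_weight \<beta> n = fact n * Gamma (2 + \<beta>) / Gamma (real n + 2 + \<beta>)"

definition A2 :: "real \<Rightarrow> (complex \<Rightarrow> complex) set" where
  "A2 \<beta> = {f. f holomorphic_on ball 0 1 \<and>
      summable (\<lambda>n. bergman_weight \<beta> n * (cmod (taylor_coeff f n))\<^sup>2)}"

definition A2_norm :: "real \<Rightarrow> (complex \<Rightarrow> complex) \<Rightarrow> real" where
  "A2_norm \<beta> f = sqrt (\<Sum>n. bergman_weight \<beta> n * (cmod (taylor_coeff f n))\<^sup>2)"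

definition cyclic_A2 :: "real \<Rightarrow> (complex \<Rightarrow> complex) \<Rightarrow> bool" where
  "cyclic_A2 \<beta> f \<longleftrightarrow> f \<in> A2 \<beta> \<and>
     (\<forall>g \<in> A2 \<beta>. \<forall>\<epsilon>>0. \<exists>p :: complex poly.
        A2_norm \<beta> (\<lambda>z. poly p z * f z - g z) < \<epsilon>)"

definition self_map_disc :: "(complex \<Rightarrow> complex) \<Rightarrow> bool" where
  "self_map_disc \<phi> \<longleftrightarrow> \<phi> holomorphic_on ball 0 1 \<and> \<phi> ` ball 0 1 \<subseteq> ball 0 1"

definition elliptic_automorphism :: "(complex \<Rightarrow> complex) \<Rightarrow> bool" where
  "elliptic_automorphism \<phi> \<longleftrightarrow> \<phi> holomorphic_on ball 0 1 \<and>
     bij_betw \<phi> (ball 0 1) (ball 0 1) \<and> (\<exists>z \<in> ball 0 1. \<phi> z = z)"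

definition denjoy_wolff_point :: "(complex \<Rightarrow> complex) \<Rightarrow> complex \<Rightarrow> bool" where
  "denjoy_wolff_point \<phi> \<omega> \<longleftrightarrow> self_map_disc \<phi> \<and> \<not> elliptic_automorphism \<phi> \<and>
     \<omega> \<in> cball 0 1 \<and> (\<forall>z \<in> ball 0 1. (\<lambda>n. (\<phi> ^^ n) z) \<longlonglongrightarrow> \<omega>)"

definition comp_eigenvector :: "real \<Rightarrow> (complex \<Rightarrow> complex) \<Rightarrow> complex \<Rightarrow> (complex \<Rightarrow> complex) \<Rightarrow> bool" where
  "comp_eigenvector \<beta> \<phi> lam f \<longleftrightarrow> f \<in> A2 \<beta> \<and> (\<exists>z \<in> ball 0 1. f z \<noteq> 0) \<and>
     (\<forall>z \<in> ball 0 1. f (\<phi> z) = lam * f z)"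

definition comp_minus_dense_range :: "real \<Rightarrow> (complex \<Rightarrow> complex) \<Rightarrow> complex \<Rightarrow> bool" where
  "comp_minus_dense_range \<beta> \<phi> lam \<longleftrightarrow>
     (\<forall>g \<in> A2 \<beta>. \<forall>\<epsilon>>0. \<exists>h \<in> A2 \<beta>.
        A2_norm \<beta> (\<lambda>z. h (\<phi> z) - lam * h z - g z) < \<epsilon>)"

end

theory Submission
  imports Defs "HOL-Complex_Analysis.Complex_Analysis"
begin

definition nu :: "real \<Rightarrow> real \<Rightarrow> real" where
  "nu \<beta> s = (\<beta> + 1) * (1 - s) powr \<beta>"

lemma weight_integral:
  assumes b: "\<beta> > -1"
  shows "(\<integral>\<^sup>+ s. ennreal (indicator {0<..<1} s * nu \<beta> s * s ^ n) \<partial>lborel)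
         = ennreal (bergman_weight \<beta> n)"
proof -
  have "((\<lambda>t. t powr (real n + 1 - 1) * (1 - t) powr (\<beta> + 1 - 1)) has_integral Beta (real n + 1) (\<beta> + 1)) {0..1}"
    by (rule has_integral_Beta_real) (use b in auto)
  then have hi: "((\<lambda>t. (\<beta>+1) * (t powr (real n) * (1 - t) powr \<beta>)) has_integral (\<beta>+1) * Beta (real n + 1) (\<beta> + 1)) {0..1}"
    by (intro has_integral_mult_right) simp
  have "(\<integral>\<^sup>+ s. ennreal (indicator {0..1} s * ((\<beta>+1) * (s powr (real n) * (1 - s) powr \<beta>))) \<partial>lborel)
       = ennreal ((\<beta>+1) * Beta (real n + 1) (\<beta> + 1))"
    by (rule nn_integral_has_integral_lebesgue[OF _ hi]) (use b in auto)
  moreover have "(\<integral>\<^sup>+ s. ennreal (indicator {0<..<1} s * nu \<beta> s * s ^ n) \<partial>lborel)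
     = (\<integral>\<^sup>+ s. ennreal (indicator {0..1} s * ((\<beta>+1) * (s powr (real n) * (1 - s) powr \<beta>))) \<partial>lborel)"
  proof (rule nn_integral_cong_AE)
    show "AE s in lborel. ennreal (indicator {0<..<1} s * nu \<beta> s * s ^ n) =
          ennreal (indicator {0..1} s * ((\<beta>+1) * (s powr (real n) * (1 - s) powr \<beta>)))"
      using AE_lborel_singleton[of 0] AE_lborel_singleton[of 1]
    proof eventually_elim
      case (elim s)
      then show ?case
        by (cases "s \<in> {0<..<1}") (auto simp: indicator_def nu_def powr_realpow mult_ac)
    qed
  qed
  moreover have "(\<beta>+1) * Beta (real n + 1) (\<beta> + 1) = bergman_weight \<beta> n"
  proof -
    have g1: "Gamma (\<beta> + 2) = (\<beta>+1) * Gamma (\<beta>+1)"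
      using Gamma_plus1[of "\<beta>+1"] b by (auto simp: add_ac nonpos_Ints_def) 
    have g2: "Gamma (real n + 1) = fact n"
      using Gamma_fact[of n] by (simp add: add_ac)
    show ?thesis
      unfolding Beta_def bergman_weight_def g2
      by (simp add: g1 add_ac)
  qed
  ultimately show ?thesis by simp
qed


definition csq :: "(complex \<Rightarrow> complex) \<Rightarrow> real \<Rightarrow> ennreal" where
  "csq F s = (\<Sum>n. ennreal ((cmod (taylor_coeff F n))\<^sup>2 * s ^ n))"

definition Dn :: "real \<Rightarrow> (complex \<Rightarrow> complex) \<Rightarrow> ennreal" where
  "Dn \<beta> F = (\<Sum>n. ennreal (bergman_weight \<beta> n * (cmod (taylor_coeff F n))\<^sup>2))"

lemma nu_nonneg: "\<beta> > -1 \<Longrightarrow> 0 \<le> nu \<beta> s"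
  unfolding nu_def by simp

lemma csq_measurable[measurable]: "csq F \<in> borel_measurable borel"
  unfolding csq_def by measurable

lemma Dn_integral:
  assumes b: "\<beta> > -1"
  shows "Dn \<beta> F = (\<integral>\<^sup>+ s. ennreal (indicator {0<..<1} s * nu \<beta> s) * csq F s \<partial>lborel)"
proof -
  have "(\<integral>\<^sup>+ s. ennreal (indicator {0<..<1} s * nu \<beta> s) * csq F s \<partial>lborel)
     = (\<integral>\<^sup>+ s. (\<Sum>n. ennreal ((cmod (taylor_coeff F n))\<^sup>2) * ennreal (indicator {0<..<1} s * nu \<beta> s * s ^ n)) \<partial>lborel)"
  proof (rule nn_integral_cong)
    fix s :: real
    show "ennreal (indicator {0<..<1} s * nu \<beta> s) * csq F s =
        (\<Sum>n. ennreal ((cmod (taylor_coeff F n))\<^sup>2) * ennreal (indicator {0<..<1} s * nu \<beta> s * s ^ n))"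
    proof (cases "s \<in> {0<..<1}")
      case True
      have "ennreal (indicator {0<..<1} s * nu \<beta> s) * csq F s
          = (\<Sum>n. ennreal (indicator {0<..<1} s * nu \<beta> s) * ennreal ((cmod (taylor_coeff F n))\<^sup>2 * s ^ n))"
        unfolding csq_def by (simp add: ennreal_suminf_cmult)
      also have "\<dots> = (\<Sum>n. ennreal ((cmod (taylor_coeff F n))\<^sup>2) * ennreal (indicator {0<..<1} s * nu \<beta> s * s ^ n))"
        using True nu_nonneg[OF b, of s]
        by (intro suminf_cong) (simp add: ennreal_mult'[symmetric] mult_ac)
      finally show ?thesis .
    qed simp
  qed
  also have "\<dots> = (\<Sum>n. \<integral>\<^sup>+ s. ennreal ((cmod (taylor_coeff F n))\<^sup>2) * ennreal (indicator {0<..<1} s * nu \<beta> s * s ^ n) \<partial>lborel)"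
    by (rule nn_integral_suminf) (simp add: nu_def)
  also have "\<dots> = (\<Sum>n. ennreal ((cmod (taylor_coeff F n))\<^sup>2) * ennreal (bergman_weight \<beta> n))"
    by (intro suminf_cong, subst nn_integral_cmult) (simp_all add: nu_def weight_integral[OF b, simplified nu_def])
  also have "\<dots> = Dn \<beta> F"
    unfolding Dn_def
  proof (intro suminf_cong)
    fix n
    have "bergman_weight \<beta> n \<ge> 0"
      unfolding bergman_weight_def using b by (intro divide_nonneg_pos mult_nonneg_nonneg Gamma_real_pos) auto
    then show "ennreal ((cmod (taylor_coeff F n))\<^sup>2) * ennreal (bergman_weight \<beta> n) =
         ennreal (bergman_weight \<beta> n * (cmod (taylor_coeff F n))\<^sup>2)"
      by (simp add: ennreal_mult'[symmetric] mult_ac)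
  qed
  finally show ?thesis by simp
qed

lemma cis_int_integral:
  fixes k :: int
  shows "((\<lambda>t. cis (of_int k * t)) has_integral (if k = 0 then complex_of_real (2*pi) else 0)) {0..2*pi}"
proof (cases "k = 0")
  case True
  then show ?thesis
    using has_integral_const_real[of "1::complex" 0 "2*pi"] by (simp add: scaleR_conv_of_real)
next
  case False
  define G where "G t = cis (of_int k * t) / (\<i> * of_int k)" for t :: real
  have "((\<lambda>t. cis (of_int k * t)) has_integral (G (2*pi) - G 0)) {0..2*pi}"
  proof (rule fundamental_theorem_of_calculus)
    fix x :: real
    have "((\<lambda>t. cis (of_int k * t)) has_derivative (\<lambda>t. (of_int k * t) *\<^sub>R (\<i> * cis (of_int k * x)))) (at x within {0..2*pi})"
      by (intro has_derivative_cis derivative_eq_intros) auto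
    then have "((\<lambda>t. cis (of_int k * t)) has_vector_derivative (of_int k * (\<i> * cis (of_int k * x)))) (at x within {0..2*pi})"
      unfolding has_vector_derivative_def by (simp add: scaleR_conv_of_real mult_ac)
    then have "(G has_vector_derivative (of_int k * (\<i> * cis (of_int k * x))) / (\<i> * of_int k)) (at x within {0..2*pi})"
      unfolding G_def by (intro has_vector_derivative_divide)
    then show "(G has_vector_derivative cis (of_int k * x)) (at x within {0..2*pi})"
      using False by (simp add: field_simps)
  qed simp
  moreover have "G (2*pi) = G 0"
  proof -
    have "cis (of_int k * (2*pi)) = 1"
      by (metis cis_multiple_2pi mult.commute Ints_of_int)
    then show ?thesis unfolding G_def by simp
  qed
  ultimately show ?thesis using False by simp
qed

lemma finite_parseval:
  fixes c :: "nat \<Rightarrow> complex"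
  shows "((\<lambda>t. (cmod (\<Sum>n<K. c n * cis (real n * t)))\<^sup>2) has_integral (2*pi * (\<Sum>n<K. (cmod (c n))\<^sup>2))) {0..2*pi}"
proof -
  define S where "S t = (\<Sum>n<K. c n * cis (real n * t))" for t
  have eq: "complex_of_real ((cmod (S t))\<^sup>2) = (\<Sum>n<K. \<Sum>m<K. c n * cnj (c m) * cis (of_int (int n - int m) * t))" for t
  proof -
    have "complex_of_real ((cmod (S t))\<^sup>2) = S t * cnj (S t)"
      by (rule complex_norm_square)
    also have "\<dots> = (\<Sum>n<K. \<Sum>m<K. (c n * cis (real n * t)) * (cnj (c m) * cis (- (real m * t))))"
      unfolding S_def by (simp add: sum_product cis_cnj)
    also have "\<dots> = (\<Sum>n<K. \<Sum>m<K. c n * cnj (c m) * cis (of_int (int n - int m) * t))"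
    proof (intro sum.cong refl)
      fix n m
      have "cis (real n * t) * cis (- (real m * t)) = cis (of_int (int n - int m) * t)"
        by (simp add: cis_mult algebra_simps)
      then show "(c n * cis (real n * t)) * (cnj (c m) * cis (- (real m * t))) = c n * cnj (c m) * cis (of_int (int n - int m) * t)"
        by (metis mult.assoc mult.left_commute)
    qed
    finally show ?thesis .
  qed
  have "((\<lambda>t. \<Sum>n<K. \<Sum>m<K. c n * cnj (c m) * cis (of_int (int n - int m) * t)) has_integral
        (\<Sum>n<K. \<Sum>m<K. c n * cnj (c m) * (if int n - int m = 0 then complex_of_real (2*pi) else 0))) {0..2*pi}"
    by (intro has_integral_sum finite_lessThan has_integral_mult_right cis_int_integral)
  also have "(\<Sum>n<K. \<Sum>m<K. c n * cnj (c m) * (if int n - int m = 0 then complex_of_real (2*pi) else 0))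
      = (\<Sum>n<K. c n * cnj (c n) * complex_of_real (2*pi))"
  proof (intro sum.cong refl)
    fix n assume n: "n \<in> {..<K}"
    have "(\<Sum>m<K. c n * cnj (c m) * (if int n - int m = 0 then complex_of_real (2*pi) else 0))
       = (\<Sum>m<K. if m = n then c n * cnj (c m) * complex_of_real (2*pi) else 0)"
      by (intro sum.cong refl) auto
    also have "\<dots> = c n * cnj (c n) * complex_of_real (2*pi)"
      using n by (simp add: sum.delta')
    finally show "(\<Sum>m<K. c n * cnj (c m) * (if int n - int m = 0 then complex_of_real (2*pi) else 0))
       = c n * cnj (c n) * complex_of_real (2*pi)" .
  qed
  also have "\<dots> = complex_of_real (2*pi * (\<Sum>n<K. (cmod (c n))\<^sup>2))"
    by (simp add: complex_norm_square[symmetric] sum_distrib_left sum_distrib_right mult_ac)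
  finally have "((\<lambda>t. complex_of_real ((cmod (S t))\<^sup>2)) has_integral complex_of_real (2*pi * (\<Sum>n<K. (cmod (c n))\<^sup>2))) {0..2*pi}"
    unfolding eq .
  from has_integral_linear[OF this bounded_linear_Re]
  show ?thesis unfolding S_def by (simp add: o_def)
qed

lemma taylor_sums:
  assumes F: "F holomorphic_on ball 0 1" and w: "w \<in> ball 0 1"
  shows "(\<lambda>n. taylor_coeff F n * w ^ n) sums F w"
  using holomorphic_power_series[OF F w] by (simp add: taylor_coeff_def)

lemma parseval:
  assumes F: "F holomorphic_on ball 0 1" and s: "0 \<le> s" "s < 1"
  shows "csq F s = (\<integral>\<^sup>+ t. ennreal (indicator {0..2*pi} t * ((cmod (F (complex_of_real (sqrt s) * cis t)))\<^sup>2 / (2*pi))) \<partial>lborel)"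
proof -
  define r where "r = sqrt s"
  have r: "0 \<le> r" "r < 1" using s by (auto simp: r_def real_sqrt_lt_1_iff)
  define a where "a n = taylor_coeff F n" for n
  define c where "c n = a n * complex_of_real r ^ n" for n
  define S where "S K t = (\<Sum>n<K. c n * cis (real n * t))" for K t
  define G where "G t = F (complex_of_real r * cis t)" for t
  have n1: "cmod (1 + complex_of_real r) = 1 + r"
  proof -
    have "1 + complex_of_real r = complex_of_real (1+r)" by simp
    then show ?thesis using r by (simp only: norm_of_real) 
  qed
  have sumc: "summable (\<lambda>n. norm (c n))"
  proof -
    have "(\<lambda>n. a n * complex_of_real ((1+r)/2) ^ n) sums F (complex_of_real ((1+r)/2))"
      unfolding a_def
      by (rule taylor_sums[OF F]) (use r n1 in simp)
    then have "summable (\<lambda>n. a n * complex_of_real ((1+r)/2) ^ n)" by (rule sums_summable)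
    from powser_insidea[OF this, of "complex_of_real r"] r
    show ?thesis unfolding c_def using n1 by simp
  qed
  define A where "A = (\<Sum>n. norm (c n))"
  have SG: "(\<lambda>K. S K t) \<longlonglongrightarrow> G t" for t
  proof -
    have "(\<lambda>n. a n * (complex_of_real r * cis t) ^ n) sums G t"
      unfolding a_def G_def by (rule taylor_sums[OF F]) (use r in \<open>auto simp: norm_mult\<close>)
    then have "(\<lambda>n. c n * cis (real n * t)) sums G t"
      by (simp add: c_def power_mult_distrib Complex.DeMoivre mult_ac)
    then show ?thesis unfolding S_def sums_def .
  qed
  have Sbound: "cmod (S K t) \<le> A" for K t
  proof -
    have "cmod (S K t) \<le> (\<Sum>n<K. norm (c n * cis (real n * t)))"
      unfolding S_def by (rule norm_sum)
    also have "\<dots> = (\<Sum>n<K. norm (c n))" by (simp add: norm_mult)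
    also have "\<dots> \<le> A" unfolding A_def by (rule sum_le_suminf[OF sumc]) auto
    finally show ?thesis .
  qed
  have contS: "continuous_on UNIV (S K)" for K
    unfolding S_def by (intro continuous_intros)
  have contG: "continuous_on UNIV G"
  proof -
    have "continuous_on UNIV (\<lambda>t. complex_of_real r * cis t)" by (intro continuous_intros)
    moreover have "continuous_on (ball 0 1) F" using F by (rule holomorphic_on_imp_continuous_on)
    moreover have "(\<lambda>t. complex_of_real r * cis t) ` UNIV \<subseteq> ball 0 1"
      using r by (auto simp: norm_mult)
    ultimately show ?thesis unfolding G_def by (intro continuous_on_compose2[of "ball 0 1" F UNIV])
  qed
  have mS[measurable]: "S K \<in> borel_measurable borel" for K
    by (rule borel_measurable_continuous_onI[OF contS])
  have mG[measurable]: "G \<in> borel_measurable borel"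
    by (rule borel_measurable_continuous_onI[OF contG])
  have fin: "(\<integral>\<^sup>+ t. ennreal (indicator {0..2*pi} t * ((cmod (S K t))\<^sup>2 / (2*pi))) \<partial>lborel)
       = ennreal (\<Sum>n<K. (cmod (c n))\<^sup>2)" for K
  proof -
    have "((\<lambda>t. (cmod (S K t))\<^sup>2 / (2*pi)) has_integral (2*pi * (\<Sum>n<K. (cmod (c n))\<^sup>2)) / (2*pi)) {0..2*pi}"
      unfolding S_def by (intro has_integral_divide finite_parseval)
    from nn_integral_has_integral_lebesgue[OF _ this]
    show ?thesis by simp
  qed
  have lim1: "(\<lambda>K. \<integral>\<^sup>+ t. ennreal (indicator {0..2*pi} t * ((cmod (S K t))\<^sup>2 / (2*pi))) \<partial>lborel)
      \<longlonglongrightarrow> (\<integral>\<^sup>+ t. ennreal (indicator {0..2*pi} t * ((cmod (G t))\<^sup>2 / (2*pi))) \<partial>lborel)"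
  proof (rule nn_integral_dominated_convergence[where w = "\<lambda>t. ennreal (indicator {0..2*pi} t * (A\<^sup>2 / (2*pi)))"])
    show "AE t in lborel. ennreal (indicator {0..2*pi} t * ((cmod (S K t))\<^sup>2 / (2*pi))) \<le> ennreal (indicator {0..2*pi} t * (A\<^sup>2 / (2*pi)))" for K
    proof (rule AE_I2)
      fix t
      have "(cmod (S K t))\<^sup>2 \<le> A\<^sup>2" using Sbound[of K t] by (intro power_mono) auto
      then show "ennreal (indicator {0..2*pi} t * ((cmod (S K t))\<^sup>2 / (2*pi))) \<le> ennreal (indicator {0..2*pi} t * (A\<^sup>2 / (2*pi)))"
        by (intro ennreal_leI) (auto simp: indicator_def divide_right_mono)
    qed
    have "(\<integral>\<^sup>+ t. ennreal (indicator {0..2*pi} t * (A\<^sup>2 / (2*pi))) \<partial>lborel) = ennreal (2*pi * (A\<^sup>2 / (2*pi)))"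
      using nn_integral_has_integral_lebesgue[OF _ has_integral_const_real[of "A\<^sup>2 / (2*pi)" 0 "2*pi"]] by simp
    then show "(\<integral>\<^sup>+ t. ennreal (indicator {0..2*pi} t * (A\<^sup>2 / (2*pi))) \<partial>lborel) < \<infinity>" by simp
    show "AE t in lborel. (\<lambda>K. ennreal (indicator {0..2*pi} t * ((cmod (S K t))\<^sup>2 / (2*pi))))
        \<longlonglongrightarrow> ennreal (indicator {0..2*pi} t * ((cmod (G t))\<^sup>2 / (2*pi)))"
      by (intro AE_I2 tendsto_ennrealI tendsto_intros SG) auto
  qed measurable
  have lim2: "(\<lambda>K. ennreal (\<Sum>n<K. (cmod (c n))\<^sup>2)) \<longlonglongrightarrow> (\<Sum>n. ennreal ((cmod (c n))\<^sup>2))"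
  proof -
    have "(\<lambda>K. \<Sum>n<K. ennreal ((cmod (c n))\<^sup>2)) \<longlonglongrightarrow> (\<Sum>n. ennreal ((cmod (c n))\<^sup>2))"
      by (rule summable_LIMSEQ) simp
    then show ?thesis by simp
  qed
  have "(\<Sum>n. ennreal ((cmod (c n))\<^sup>2)) = (\<integral>\<^sup>+ t. ennreal (indicator {0..2*pi} t * ((cmod (G t))\<^sup>2 / (2*pi))) \<partial>lborel)"
    using LIMSEQ_unique[OF lim2 lim1[unfolded fin]] .
  moreover have "csq F s = (\<Sum>n. ennreal ((cmod (c n))\<^sup>2))"
  proof -
    have "(cmod (c n))\<^sup>2 = (cmod (taylor_coeff F n))\<^sup>2 * s ^ n" for n
    proof -
      have "(cmod (c n))\<^sup>2 = (cmod (a n))\<^sup>2 * (r\<^sup>2) ^ n"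
        unfolding c_def using r by (simp add: norm_mult norm_power power_mult_distrib mult.commute flip: power_mult)
      then show ?thesis using s by (simp add: r_def a_def)
    qed
    then show ?thesis unfolding csq_def by simp
  qed
  ultimately show ?thesis by (simp add: G_def r_def)
qed

lemma taylor_coeff_cong:
  assumes "\<And>z. z \<in> ball 0 1 \<Longrightarrow> F z = G z"
  shows "taylor_coeff F n = taylor_coeff G n"
proof -
  have "eventually (\<lambda>z. F z = G z) (nhds 0)"
    unfolding eventually_nhds by (intro exI[of _ "ball 0 1"]) (use assms in auto)
  then show ?thesis unfolding taylor_coeff_def
    using higher_deriv_cong_ev[of F G 0 0 n] by simp
qed

lemma Dn_cong:
  assumes "\<And>z. z \<in> ball 0 1 \<Longrightarrow> F z = G z"
  shows "Dn \<beta> F = Dn \<beta> G"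
  unfolding Dn_def using taylor_coeff_cong[OF assms] by simp

lemma circle_measurable:
  assumes F: "F holomorphic_on ball 0 1" and r: "0 \<le> r" "r < 1"
  shows "(\<lambda>t. F (complex_of_real r * cis t)) \<in> borel_measurable borel"
proof (rule borel_measurable_continuous_onI)
  have "continuous_on UNIV (\<lambda>t. complex_of_real r * cis t)" by (intro continuous_intros)
  moreover have "continuous_on (ball 0 1) F" using F by (rule holomorphic_on_imp_continuous_on)
  moreover have "(\<lambda>t. complex_of_real r * cis t) ` UNIV \<subseteq> ball 0 1"
    using r by (auto simp: norm_mult)
  ultimately show "continuous_on UNIV (\<lambda>t. F (complex_of_real r * cis t))"
    by (intro continuous_on_compose2[of "ball 0 1" F UNIV])
qed

lemma csq_compare:
  assumes F: "F holomorphic_on ball 0 1" and G1: "G1 holomorphic_on ball 0 1"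
    and G2: "G2 holomorphic_on ball 0 1" and ab: "0 \<le> a" "0 \<le> b"
    and le: "\<And>z. z \<in> ball 0 1 \<Longrightarrow> (cmod (F z))\<^sup>2 \<le> a * (cmod (G1 z))\<^sup>2 + b * (cmod (G2 z))\<^sup>2"
    and s: "0 \<le> s" "s < 1"
  shows "csq F s \<le> ennreal a * csq G1 s + ennreal b * csq G2 s"
proof -
  define r where "r = sqrt s"
  have r: "0 \<le> r" "r < 1" using s by (auto simp: r_def)
  have m1[measurable]: "(\<lambda>t. G1 (complex_of_real r * cis t)) \<in> borel_measurable borel"
    by (rule circle_measurable[OF G1 r])
  have m2[measurable]: "(\<lambda>t. G2 (complex_of_real r * cis t)) \<in> borel_measurable borel"
    by (rule circle_measurable[OF G2 r])
  have "csq F s = (\<integral>\<^sup>+ t. ennreal (indicator {0..2*pi} t * ((cmod (F (complex_of_real r * cis t)))\<^sup>2 / (2*pi))) \<partial>lborel)"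
    unfolding r_def by (rule parseval[OF F s])
  also have "\<dots> \<le> (\<integral>\<^sup>+ t. ennreal a * ennreal (indicator {0..2*pi} t * ((cmod (G1 (complex_of_real r * cis t)))\<^sup>2 / (2*pi)))
           + ennreal b * ennreal (indicator {0..2*pi} t * ((cmod (G2 (complex_of_real r * cis t)))\<^sup>2 / (2*pi))) \<partial>lborel)"
  proof (rule nn_integral_mono)
    fix t :: real
    have zin: "complex_of_real r * cis t \<in> ball 0 1" using r by (simp add: norm_mult)
    have "indicator {0..2*pi} t * ((cmod (F (complex_of_real r * cis t)))\<^sup>2 / (2*pi))
       \<le> a * (indicator {0..2*pi} t * ((cmod (G1 (complex_of_real r * cis t)))\<^sup>2 / (2*pi)))
         + b * (indicator {0..2*pi} t * ((cmod (G2 (complex_of_real r * cis t)))\<^sup>2 / (2*pi)))"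
      using le[OF zin] by (auto simp: indicator_def add_divide_distrib[symmetric] intro!: divide_right_mono)
    then show "ennreal (indicator {0..2*pi} t * ((cmod (F (complex_of_real r * cis t)))\<^sup>2 / (2*pi)))
       \<le> ennreal a * ennreal (indicator {0..2*pi} t * ((cmod (G1 (complex_of_real r * cis t)))\<^sup>2 / (2*pi)))
           + ennreal b * ennreal (indicator {0..2*pi} t * ((cmod (G2 (complex_of_real r * cis t)))\<^sup>2 / (2*pi)))"
      using ab by (simp add: ennreal_mult'[symmetric] ennreal_plus[symmetric] del: ennreal_plus)
  qed
  also have "\<dots> = ennreal a * csq G1 s + ennreal b * csq G2 s"
  proof -
    have i1: "(\<lambda>t. ennreal (indicator {0..2*pi} t * ((cmod (G1 (complex_of_real r * cis t)))\<^sup>2 / (2*pi)))) \<in> borel_measurable lborel"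
      by measurable
    have i2: "(\<lambda>t. ennreal (indicator {0..2*pi} t * ((cmod (G2 (complex_of_real r * cis t)))\<^sup>2 / (2*pi)))) \<in> borel_measurable lborel"
      by measurable
    have e1: "(\<lambda>t. ennreal a * ennreal (indicator {0..2*pi} t * ((cmod (G1 (complex_of_real r * cis t)))\<^sup>2 / (2*pi)))) \<in> borel_measurable lborel"
      using i1 by (rule borel_measurable_times_ennreal[OF borel_measurable_const])
    have e2: "(\<lambda>t. ennreal b * ennreal (indicator {0..2*pi} t * ((cmod (G2 (complex_of_real r * cis t)))\<^sup>2 / (2*pi)))) \<in> borel_measurable lborel"
      using i2 by (rule borel_measurable_times_ennreal[OF borel_measurable_const])
    show ?thesis
      apply (subst nn_integral_add[OF e1 e2])
      apply (subst nn_integral_cmult[OF i1])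
      apply (subst nn_integral_cmult[OF i2])
      apply (simp only: r_def parseval[OF G1 s, symmetric] parseval[OF G2 s, symmetric])
      done
  qed
  finally show ?thesis .
qed

lemma nu_measurable[measurable]: "(\<lambda>s. ennreal (indicator {0<..<1} s * nu \<beta> s)) \<in> borel_measurable borel"
  unfolding nu_def by measurable

lemma Dn_compare:
  assumes b0: "\<beta> > -1"
    and F: "F holomorphic_on ball 0 1" and G1: "G1 holomorphic_on ball 0 1"
    and G2: "G2 holomorphic_on ball 0 1" and ab: "0 \<le> a" "0 \<le> b"
    and le: "\<And>z. z \<in> ball 0 1 \<Longrightarrow> (cmod (F z))\<^sup>2 \<le> a * (cmod (G1 z))\<^sup>2 + b * (cmod (G2 z))\<^sup>2"
  shows "Dn \<beta> F \<le> ennreal a * Dn \<beta> G1 + ennreal b * Dn \<beta> G2"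
proof -
  define W where "W s = ennreal (indicator {0<..<1} s * nu \<beta> s)" for s
  have mW[measurable]: "W \<in> borel_measurable borel" unfolding W_def by measurable
  have "Dn \<beta> F = (\<integral>\<^sup>+ s. W s * csq F s \<partial>lborel)"
    unfolding W_def by (rule Dn_integral[OF b0])
  also have "\<dots> \<le> (\<integral>\<^sup>+ s. ennreal a * (W s * csq G1 s) + ennreal b * (W s * csq G2 s) \<partial>lborel)"
  proof (rule nn_integral_mono)
    fix s :: real
    show "W s * csq F s \<le> ennreal a * (W s * csq G1 s) + ennreal b * (W s * csq G2 s)"
    proof (cases "s \<in> {0<..<1}")
      case True
      have "W s * csq F s \<le> W s * (ennreal a * csq G1 s + ennreal b * csq G2 s)"
        by (intro mult_left_mono csq_compare[OF F G1 G2 ab le]) (use True in auto)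
      also have "\<dots> = ennreal a * (W s * csq G1 s) + ennreal b * (W s * csq G2 s)"
        by (simp add: distrib_left mult_ac)
      finally show ?thesis .
    qed (simp add: W_def)
  qed
  also have "\<dots> = ennreal a * (\<integral>\<^sup>+ s. W s * csq G1 s \<partial>lborel) + ennreal b * (\<integral>\<^sup>+ s. W s * csq G2 s \<partial>lborel)"
  proof -
    have i1: "(\<lambda>s. W s * csq G1 s) \<in> borel_measurable lborel" by measurable
    have i2: "(\<lambda>s. W s * csq G2 s) \<in> borel_measurable lborel" by measurable
    have e1: "(\<lambda>s. ennreal a * (W s * csq G1 s)) \<in> borel_measurable lborel" by measurable
    have e2: "(\<lambda>s. ennreal b * (W s * csq G2 s)) \<in> borel_measurable lborel" by measurable
    show ?thesis
      apply (subst nn_integral_add[OF e1 e2])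
      apply (subst nn_integral_cmult[OF i1])
      apply (subst nn_integral_cmult[OF i2])
      apply (rule refl)
      done
  qed
  also have "\<dots> = ennreal a * Dn \<beta> G1 + ennreal b * Dn \<beta> G2"
    unfolding W_def by (simp only: Dn_integral[OF b0, symmetric])
  finally show ?thesis .
qed

lemma holo_bounded_cball:
  assumes F: "F holomorphic_on ball 0 1" and r: "0 \<le> r" "r < 1"
  obtains B where "B > 0" "\<And>z. z \<in> cball 0 r \<Longrightarrow> cmod (F z) \<le> B"
proof -
  have "continuous_on (cball 0 r) F"
    using holomorphic_on_imp_continuous_on[OF F]
    by (rule continuous_on_subset) (use r in auto)
  then have "compact (F ` cball 0 r)" by (intro compact_continuous_image) auto
  then have "bounded (F ` cball 0 r)" by (rule compact_imp_bounded)
  then show ?thesis using that unfolding bounded_pos by auto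
qed

lemma csq_dominated:
  assumes F: "F holomorphic_on ball 0 1"
    and v: "\<And>N. v N holomorphic_on ball 0 1"
    and M: "\<And>N z. z \<in> ball 0 1 \<Longrightarrow> cmod (v N z) \<le> M"
    and lim: "\<And>z. z \<in> ball 0 1 \<Longrightarrow> (\<lambda>N. v N z) \<longlonglongrightarrow> 0"
    and s: "0 \<le> s" "s < 1"
  shows "(\<lambda>N. csq (\<lambda>z. v N z * F z) s) \<longlonglongrightarrow> 0"
proof -
  define r where "r = sqrt s"
  have r: "0 \<le> r" "r < 1" using s by (auto simp: r_def)
  define z where "z t = complex_of_real r * cis t" for t
  have zin: "z t \<in> ball 0 1" for t using r by (simp add: z_def norm_mult)
  have zc: "z t \<in> cball 0 r" for t using r by (simp add: z_def norm_mult)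
  obtain B where B: "B > 0" "\<And>w. w \<in> cball 0 r \<Longrightarrow> cmod (F w) \<le> B"
    using holo_bounded_cball[OF F r] by blast
  have M0: "0 \<le> M" using M[of 0 0] norm_ge_zero[of "v 0 0"] by (simp del: norm_ge_zero)
  have vF: "(\<lambda>w. v N w * F w) holomorphic_on ball 0 1" for N
    by (intro holomorphic_on_mult v F)
  have mv[measurable]: "(\<lambda>t. v N (z t)) \<in> borel_measurable borel" for N
    unfolding z_def by (rule circle_measurable[OF v r])
  have mF[measurable]: "(\<lambda>t. F (z t)) \<in> borel_measurable borel"
    unfolding z_def by (rule circle_measurable[OF F r])
  have eq: "csq (\<lambda>w. v N w * F w) s = (\<integral>\<^sup>+ t. ennreal (indicator {0..2*pi} t * ((cmod (v N (z t) * F (z t)))\<^sup>2 / (2*pi))) \<partial>lborel)" for N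
    unfolding z_def r_def by (rule parseval[OF vF s])
  have "(\<lambda>N. \<integral>\<^sup>+ t. ennreal (indicator {0..2*pi} t * ((cmod (v N (z t) * F (z t)))\<^sup>2 / (2*pi))) \<partial>lborel)
     \<longlonglongrightarrow> (\<integral>\<^sup>+ t. ennreal (indicator {0..2*pi} t * ((cmod (0 * F (z t)))\<^sup>2 / (2*pi))) \<partial>lborel)"
  proof (rule nn_integral_dominated_convergence[where w = "\<lambda>t. ennreal (indicator {0..2*pi} t * ((M * B)\<^sup>2 / (2*pi)))"])
    show "AE t in lborel. ennreal (indicator {0..2*pi} t * ((cmod (v N (z t) * F (z t)))\<^sup>2 / (2*pi))) \<le> ennreal (indicator {0..2*pi} t * ((M * B)\<^sup>2 / (2*pi)))" for N
    proof (rule AE_I2)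
      fix t
      have "cmod (v N (z t) * F (z t)) \<le> M * B"
        unfolding norm_mult by (intro mult_mono M zin B zc M0) auto
      then have "(cmod (v N (z t) * F (z t)))\<^sup>2 \<le> (M * B)\<^sup>2" by (intro power_mono) auto
      then show "ennreal (indicator {0..2*pi} t * ((cmod (v N (z t) * F (z t)))\<^sup>2 / (2*pi))) \<le> ennreal (indicator {0..2*pi} t * ((M * B)\<^sup>2 / (2*pi)))"
        by (intro ennreal_leI) (auto simp: indicator_def divide_right_mono)
    qed
    have "(\<integral>\<^sup>+ t. ennreal (indicator {0..2*pi} t * ((M * B)\<^sup>2 / (2*pi))) \<partial>lborel) = ennreal (2*pi * ((M * B)\<^sup>2 / (2*pi)))"
      using nn_integral_has_integral_lebesgue[OF _ has_integral_const_real[of "(M * B)\<^sup>2 / (2*pi)" 0 "2*pi"]] by simp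
    then show "(\<integral>\<^sup>+ t. ennreal (indicator {0..2*pi} t * ((M * B)\<^sup>2 / (2*pi))) \<partial>lborel) < \<infinity>" by simp
    show "AE t in lborel. (\<lambda>N. ennreal (indicator {0..2*pi} t * ((cmod (v N (z t) * F (z t)))\<^sup>2 / (2*pi))))
        \<longlonglongrightarrow> ennreal (indicator {0..2*pi} t * ((cmod (0 * F (z t)))\<^sup>2 / (2*pi)))"
      by (intro AE_I2 tendsto_ennrealI tendsto_intros lim zin) auto
  qed measurable
  then show ?thesis unfolding eq by simp
qed

lemma Dn_dominated:
  assumes b0: "\<beta> > -1"
    and F: "F holomorphic_on ball 0 1" and fin: "Dn \<beta> F < \<infinity>"
    and v: "\<And>N. v N holomorphic_on ball 0 1"
    and M: "\<And>N z. z \<in> ball 0 1 \<Longrightarrow> cmod (v N z) \<le> M"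
    and lim: "\<And>z. z \<in> ball 0 1 \<Longrightarrow> (\<lambda>N. v N z) \<longlonglongrightarrow> 0"
  shows "(\<lambda>N. Dn \<beta> (\<lambda>z. v N z * F z)) \<longlonglongrightarrow> 0"
proof -
  define W where "W s = ennreal (indicator {0<..<1} s * nu \<beta> s)" for s
  have mW[measurable]: "W \<in> borel_measurable borel" unfolding W_def by measurable
  have M0: "0 \<le> M" using M[of 0 0] norm_ge_zero[of "v 0 0"] by (simp del: norm_ge_zero)
  have vF: "(\<lambda>w. v N w * F w) holomorphic_on ball 0 1" for N
    by (intro holomorphic_on_mult v F)
  have eq: "Dn \<beta> (\<lambda>z. v N z * F z) = (\<integral>\<^sup>+ s. W s * csq (\<lambda>z. v N z * F z) s \<partial>lborel)" for N
    unfolding W_def by (rule Dn_integral[OF b0])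
  have "(\<lambda>N. \<integral>\<^sup>+ s. W s * csq (\<lambda>z. v N z * F z) s \<partial>lborel) \<longlonglongrightarrow> (\<integral>\<^sup>+ s. W s * 0 \<partial>lborel)"
  proof (rule nn_integral_dominated_convergence)
    show "AE s in lborel. W s * csq (\<lambda>z. v N z * F z) s \<le> ennreal (M\<^sup>2) * (W s * csq F s)" for N
    proof (rule AE_I2)
      fix s :: real
      show "W s * csq (\<lambda>z. v N z * F z) s \<le> ennreal (M\<^sup>2) * (W s * csq F s)"
      proof (cases "s \<in> {0<..<1}")
        case True
        have "csq (\<lambda>z. v N z * F z) s \<le> ennreal (M\<^sup>2) * csq F s + ennreal 0 * csq F s"
        proof (rule csq_compare[OF vF F F])
          fix z :: complex assume z: "z \<in> ball 0 1"
          have "cmod (v N z * F z) \<le> M * cmod (F z)"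
            unfolding norm_mult by (intro mult_right_mono M z) auto
          then have "(cmod (v N z * F z))\<^sup>2 \<le> (M * cmod (F z))\<^sup>2" by (intro power_mono) auto
          then show "(cmod (v N z * F z))\<^sup>2 \<le> M\<^sup>2 * (cmod (F z))\<^sup>2 + 0 * (cmod (F z))\<^sup>2"
            by (simp add: power_mult_distrib)
        qed (use True in auto)
        then have "W s * csq (\<lambda>z. v N z * F z) s \<le> W s * (ennreal (M\<^sup>2) * csq F s)"
          by (intro mult_left_mono) auto
        then show ?thesis by (simp add: mult_ac)
      qed (simp add: W_def)
    qed
    have "(\<integral>\<^sup>+ s. ennreal (M\<^sup>2) * (W s * csq F s) \<partial>lborel) = ennreal (M\<^sup>2) * Dn \<beta> F"
      by (subst nn_integral_cmult) (auto simp: W_def Dn_integral[OF b0])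
    also have "\<dots> < \<infinity>" using fin by (simp add: ennreal_mult_less_top)
    finally show "(\<integral>\<^sup>+ s. ennreal (M\<^sup>2) * (W s * csq F s) \<partial>lborel) < \<infinity>" .
    show "AE s in lborel. (\<lambda>N. W s * csq (\<lambda>z. v N z * F z) s) \<longlonglongrightarrow> W s * 0"
    proof (rule AE_I2)
      fix s :: real
      show "(\<lambda>N. W s * csq (\<lambda>z. v N z * F z) s) \<longlonglongrightarrow> W s * 0"
      proof (cases "s \<in> {0<..<1}")
        case True
        have "(\<lambda>N. W s * csq (\<lambda>z. v N z * F z) s) \<longlonglongrightarrow> W s * 0"
          by (intro ennreal_tendsto_cmult csq_dominated[OF F v M lim]) (use True in \<open>auto simp: W_def\<close>)
        then show ?thesis .
      qed (simp add: W_def)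
    qed
  qed measurable
  then show ?thesis unfolding eq by simp
qed

lemma bw_nonneg: "\<beta> > -1 \<Longrightarrow> 0 \<le> bergman_weight \<beta> n"
  unfolding bergman_weight_def by (intro divide_nonneg_pos mult_nonneg_nonneg Gamma_real_pos) auto

lemma A2_Dn:
  assumes b0: "\<beta> > -1"
  shows "F \<in> A2 \<beta> \<longleftrightarrow> F holomorphic_on ball 0 1 \<and> Dn \<beta> F < \<infinity>"
proof -
  have nn: "\<And>n. 0 \<le> bergman_weight \<beta> n * (cmod (taylor_coeff F n))\<^sup>2"
    using bw_nonneg[OF b0] by simp
  have "summable (\<lambda>n. bergman_weight \<beta> n * (cmod (taylor_coeff F n))\<^sup>2) \<longleftrightarrow> Dn \<beta> F < \<infinity>"
    unfolding Dn_def using ennreal_suminf_neq_top[OF _ nn] summable_suminf_not_top[OF nn]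
    by (auto simp: top.not_eq_extremum)
  then show ?thesis unfolding A2_def by auto
qed

lemma Dn_A2_norm:
  assumes b0: "\<beta> > -1" and F: "F \<in> A2 \<beta>"
  shows "Dn \<beta> F = ennreal ((A2_norm \<beta> F)\<^sup>2)"
proof -
  have nn: "\<And>n. 0 \<le> bergman_weight \<beta> n * (cmod (taylor_coeff F n))\<^sup>2"
    using bw_nonneg[OF b0] by simp
  have sm: "summable (\<lambda>n. bergman_weight \<beta> n * (cmod (taylor_coeff F n))\<^sup>2)"
    using F unfolding A2_def by auto
  have "0 \<le> (\<Sum>n. bergman_weight \<beta> n * (cmod (taylor_coeff F n))\<^sup>2)"
    by (rule suminf_nonneg[OF sm nn])
  then show ?thesis unfolding Dn_def A2_norm_def
    using suminf_ennreal2[OF nn sm] by simp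
qed

lemma A2_norm_nonneg:
  assumes b0: "\<beta> > -1" and F: "F \<in> A2 \<beta>"
  shows "A2_norm \<beta> F \<ge> 0"
proof -
  have nn: "\<And>n. 0 \<le> bergman_weight \<beta> n * (cmod (taylor_coeff F n))\<^sup>2"
    using bw_nonneg[OF b0] by simp
  have sm: "summable (\<lambda>n. bergman_weight \<beta> n * (cmod (taylor_coeff F n))\<^sup>2)"
    using F unfolding A2_def by auto
  show ?thesis unfolding A2_norm_def using suminf_nonneg[OF sm nn] by simp
qed

lemma norm_small:
  assumes b0: "\<beta> > -1" and F: "F holomorphic_on ball 0 1" and e: "\<epsilon> > 0"
    and D: "Dn \<beta> F < ennreal (\<epsilon>\<^sup>2)"
  shows "A2_norm \<beta> F < \<epsilon>"
proof -
  have "Dn \<beta> F < top" using D ennreal_less_top[of "\<epsilon>\<^sup>2"] by (rule order.strict_trans)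
  then have "Dn \<beta> F < \<infinity>" by simp
  then have FA: "F \<in> A2 \<beta>" using A2_Dn[OF b0] F by blast
  then have "ennreal ((A2_norm \<beta> F)\<^sup>2) < ennreal (\<epsilon>\<^sup>2)" using D Dn_A2_norm[OF b0] by simp
  then have "(A2_norm \<beta> F)\<^sup>2 < \<epsilon>\<^sup>2" by (simp add: ennreal_less_iff)
  moreover have "A2_norm \<beta> F \<ge> 0" by (rule A2_norm_nonneg[OF b0 FA])
  ultimately show ?thesis using e power2_less_imp_less[of "A2_norm \<beta> F" \<epsilon>] by linarith
qed

lemma Dn_small:
  assumes b0: "\<beta> > -1" and F: "F \<in> A2 \<beta>" and e: "\<epsilon> > 0"
    and N: "A2_norm \<beta> F < \<epsilon>"
  shows "Dn \<beta> F < ennreal (\<epsilon>\<^sup>2)"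
proof -
  have "A2_norm \<beta> F \<ge> 0" by (rule A2_norm_nonneg[OF b0 F])
  then have "(A2_norm \<beta> F)\<^sup>2 < \<epsilon>\<^sup>2" using N by (intro power_strict_mono) auto
  then show ?thesis using Dn_A2_norm[OF b0 F] by (simp add: ennreal_less_iff)
qed

lemma ennreal_two_sum_less:
  fixes A B :: ennreal
  assumes "A < ennreal x" "B < ennreal y" "0 \<le> x" "0 \<le> y"
  shows "ennreal 2 * A + ennreal 2 * B < ennreal (2*x + 2*y)"
proof -
  have "A < top" using assms(1) ennreal_less_top[of x] by (rule order.strict_trans)
  then obtain a where a: "A = ennreal a" "0 \<le> a" unfolding less_top_ennreal by blast
  have "B < top" using assms(2) ennreal_less_top[of y] by (rule order.strict_trans)
  then obtain b where b: "B = ennreal b" "0 \<le> b" unfolding less_top_ennreal by blast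
  have "a < x" "b < y" using assms a b by (auto simp: ennreal_less_iff)
  have e1: "ennreal 2 * ennreal a = ennreal (2 * a)" by (rule ennreal_mult'[symmetric]) simp
  have e2: "ennreal 2 * ennreal b = ennreal (2 * b)" by (rule ennreal_mult'[symmetric]) simp
  have e3: "ennreal (2 * a) + ennreal (2 * b) = ennreal (2*a + 2*b)" by (rule ennreal_plus[symmetric]) (use a b in auto)
  have "ennreal 2 * A + ennreal 2 * B = ennreal (2*a + 2*b)"
    unfolding a b e1 e2 e3 ..
  also have "\<dots> < ennreal (2*x + 2*y)"
    using \<open>a < x\<close> \<open>b < y\<close> a b by (subst ennreal_less_iff) auto
  finally show ?thesis .
qed

lemma sq_tri: "(cmod (x + y))\<^sup>2 \<le> 2 * (cmod x)\<^sup>2 + 2 * (cmod y)\<^sup>2"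
proof -
  have "cmod (x + y) \<le> cmod x + cmod y" by (rule norm_triangle_ineq)
  then have "(cmod (x + y))\<^sup>2 \<le> (cmod x + cmod y)\<^sup>2" by (intro power_mono) auto
  also have "\<dots> \<le> 2 * (cmod x)\<^sup>2 + 2 * (cmod y)\<^sup>2"
    using sum_squares_ge_zero[of "cmod x - cmod y" 0] by (simp add: power2_eq_square algebra_simps)
  finally show ?thesis .
qed

lemma Dn_tri:
  assumes b0: "\<beta> > -1" and X: "X holomorphic_on ball 0 1" and Y: "Y holomorphic_on ball 0 1"
  shows "Dn \<beta> (\<lambda>z. X z + Y z) \<le> ennreal 2 * Dn \<beta> X + ennreal 2 * Dn \<beta> Y"
proof -
  have "Dn \<beta> (\<lambda>z. X z + Y z) \<le> ennreal 2 * Dn \<beta> X + ennreal 2 * Dn \<beta> Y"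
  proof (rule Dn_compare[OF b0 _ X Y])
    show "(\<lambda>z. X z + Y z) holomorphic_on ball 0 1" by (intro holomorphic_on_add X Y)
  qed (simp_all add: sq_tri)
  then show ?thesis .
qed

lemma iter_props:
  assumes "self_map_disc \<phi>"
  shows "(\<phi> ^^ n) holomorphic_on ball 0 1 \<and> (\<phi> ^^ n) ` ball 0 1 \<subseteq> ball 0 1"
proof (induction n)
  case 0
  then show ?case by (simp add: holomorphic_on_id id_def)
next
  case (Suc n)
  have "(\<phi> \<circ> (\<phi> ^^ n)) holomorphic_on ball 0 1"
    using Suc assms unfolding self_map_disc_def by (intro holomorphic_on_compose_gen[of "\<phi>^^n" "ball 0 1" \<phi> "ball 0 1"]) auto
  moreover have "(\<phi> \<circ> (\<phi> ^^ n)) ` ball 0 1 \<subseteq> ball 0 1"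
    using Suc assms unfolding self_map_disc_def by (auto simp del: mem_ball_0)
  ultimately show ?case by (simp only: funpow.simps)
qed

lemma iter_eig:
  fixes f :: "complex \<Rightarrow> complex" and lam :: complex
  assumes "self_map_disc \<phi>" and eig: "\<And>z. z \<in> ball 0 1 \<Longrightarrow> f (\<phi> z) = lam * f z"
    and z: "z \<in> ball 0 1"
  shows "f ((\<phi> ^^ n) z) = lam ^ n * f z"
proof (induction n)
  case 0 then show ?case by simp
next
  case (Suc n)
  have "(\<phi> ^^ n) z \<in> ball 0 1" using iter_props[OF assms(1), of n] z by blast
  then show ?case using Suc eig by simp
qed

lemma poly_bounded_disc:
  fixes Q :: "complex poly"
  obtains M where "M \<ge> 0" "\<And>z. z \<in> cball 0 1 \<Longrightarrow> cmod (poly Q z) \<le> M"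
proof -
  have "continuous_on (cball 0 1) (\<lambda>z. poly Q z)" by (intro continuous_intros)
  then have "compact ((\<lambda>z. poly Q z) ` cball 0 1)" by (intro compact_continuous_image) auto
  then have "bounded ((\<lambda>z. poly Q z) ` cball 0 1)" by (rule compact_imp_bounded)
  then obtain M where "M > 0" "\<And>z. z \<in> cball 0 1 \<Longrightarrow> cmod (poly Q z) \<le> M"
    unfolding bounded_pos by auto
  then show ?thesis using that[of M] by auto
qed

definition Good :: "real \<Rightarrow> (complex \<Rightarrow> complex) \<Rightarrow> complex \<Rightarrow> (complex \<Rightarrow> complex) \<Rightarrow> bool" where
  "Good \<beta> \<phi> lam F \<longleftrightarrow> (\<forall>\<delta>>0. \<exists>h\<in>A2 \<beta>. Dn \<beta> (\<lambda>z. h (\<phi> z) - lam * h z - F z) < ennreal \<delta>)"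

lemma lam_nonzero:
  fixes f :: "complex \<Rightarrow> complex"
  assumes sm: "self_map_disc \<phi>" and dw: "denjoy_wolff_point \<phi> \<omega>" and w1: "cmod \<omega> = 1"
    and ev: "comp_eigenvector \<beta> \<phi> lam f" and b0: "\<beta> > -1"
  shows "lam \<noteq> 0"
proof
  assume l0: "lam = 0"
  have fA: "f \<in> A2 \<beta>" and nz: "\<exists>z\<in>ball 0 1. f z \<noteq> 0" and eig: "\<And>z. z \<in> ball 0 1 \<Longrightarrow> f (\<phi> z) = lam * f z"
    using ev unfolding comp_eigenvector_def by auto
  have fh: "f holomorphic_on ball 0 1" using fA unfolding A2_def by auto
  have ph: "\<phi> holomorphic_on ball 0 1" and pb: "\<phi> ` ball 0 1 \<subseteq> ball 0 1"
    using sm unfolding self_map_disc_def by auto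
  have lim: "(\<lambda>n. (\<phi> ^^ n) 0) \<longlonglongrightarrow> \<omega>"
    using dw unfolding denjoy_wolff_point_def by auto
  show False
  proof (cases "\<phi> constant_on ball 0 1")
    case True
    then obtain c where c: "\<And>z. z \<in> ball 0 1 \<Longrightarrow> \<phi> z = c" unfolding constant_on_def by blast
    have cin: "c \<in> ball 0 1" using c[of 0] pb by force
    have "(\<phi> ^^ Suc n) 0 = c" for n
    proof (induction n)
      case 0 then show ?case using c[of 0] by simp
    next
      case (Suc n) then show ?case using c[OF cin] by simp
    qed
    then have "(\<lambda>n. (\<phi> ^^ Suc n) 0) \<longlonglongrightarrow> c" by simp
    moreover have "(\<lambda>n. (\<phi> ^^ Suc n) 0) \<longlonglongrightarrow> \<omega>" using lim by (rule LIMSEQ_Suc)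
    ultimately have "c = \<omega>" by (rule LIMSEQ_unique)
    then show False using cin w1 by simp
  next
    case False
    have op: "open (\<phi> ` ball 0 1)"
      by (rule open_mapping_thm[OF ph _ _ _ _ False]) auto
    have "f z = 0" if z: "z \<in> ball 0 1" for z
    proof (rule analytic_continuation_open[of "\<phi> ` ball 0 1" "ball 0 1" f "\<lambda>_. 0"])
      show "\<phi> ` ball 0 1 \<noteq> {}" by auto
      show "\<And>w. w \<in> \<phi> ` ball 0 1 \<Longrightarrow> f w = 0" using eig l0 by auto
    qed (use op pb fh z in auto)
    then show False using nz by auto
  qed
qed

lemma G1:
  fixes f :: "complex \<Rightarrow> complex" and Q :: "complex poly"
  assumes b0: "\<beta> > -1" and sm: "self_map_disc \<phi>" and dw: "denjoy_wolff_point \<phi> \<omega>" and w1: "cmod \<omega> = 1"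
    and fA: "f \<in> A2 \<beta>" and eig: "\<And>z. z \<in> ball 0 1 \<Longrightarrow> f (\<phi> z) = lam * f z" and l0: "lam \<noteq> 0"
  shows "Good \<beta> \<phi> lam (\<lambda>z. (poly Q z - poly Q \<omega>) * f z)"
  unfolding Good_def
proof (intro allI impI)
  fix \<delta> :: real assume d: "\<delta> > 0"
  have fh: "f holomorphic_on ball 0 1" and fD: "Dn \<beta> f < \<infinity>" using fA A2_Dn[OF b0] by auto
  have ph: "\<phi> holomorphic_on ball 0 1" using sm unfolding self_map_disc_def by auto
  obtain MQ where MQ: "MQ \<ge> 0" "\<And>z. z \<in> cball 0 1 \<Longrightarrow> cmod (poly Q z) \<le> MQ"
    using poly_bounded_disc by blast
  have itb: "(\<phi> ^^ k) z \<in> ball 0 1" if "z \<in> ball 0 1" for k z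
    using iter_props[OF sm, of k] that by blast
  have ith: "(\<phi> ^^ k) holomorphic_on ball 0 1" for k using iter_props[OF sm] by blast
  define v where "v N z = poly Q \<omega> - poly Q ((\<phi> ^^ N) z)" for N z
  have vh: "v N holomorphic_on ball 0 1" for N
    unfolding v_def by (intro holomorphic_intros ith)
  have vb: "cmod (v N z) \<le> 2 * MQ" if "z \<in> ball 0 1" for N z
  proof -
    have "cmod (v N z) \<le> cmod (poly Q \<omega>) + cmod (poly Q ((\<phi> ^^ N) z))"
      unfolding v_def by (rule norm_triangle_ineq4)
    also have "\<dots> \<le> MQ + MQ" using MQ(2)[of \<omega>] MQ(2)[of "(\<phi> ^^ N) z"] itb[OF that, of N] w1
      by (intro add_mono) auto
    finally show ?thesis by simp
  qed
  have vl: "(\<lambda>N. v N z) \<longlonglongrightarrow> 0" if "z \<in> ball 0 1" for z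
  proof -
    have "(\<lambda>N. (\<phi> ^^ N) z) \<longlonglongrightarrow> \<omega>" using dw that unfolding denjoy_wolff_point_def by auto
    then have "(\<lambda>N. poly Q \<omega> - poly Q ((\<phi> ^^ N) z)) \<longlonglongrightarrow> poly Q \<omega> - poly Q \<omega>"
      by (intro tendsto_intros)
    then show ?thesis unfolding v_def by simp
  qed
  have "(\<lambda>N. Dn \<beta> (\<lambda>z. v N z * f z)) \<longlonglongrightarrow> 0"
    by (rule Dn_dominated[OF b0 fh fD vh vb vl])
  from order_tendstoD(2)[OF this, of "ennreal \<delta>"] d
  obtain N where N: "Dn \<beta> (\<lambda>z. v N z * f z) < ennreal \<delta>"
    by (auto simp: eventually_sequentially)
  define u where "u z = - (inverse lam * (\<Sum>k<N. poly Q ((\<phi> ^^ k) z)))" for z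
  define h where "h z = u z * f z" for z
  have uh: "u holomorphic_on ball 0 1" unfolding u_def by (intro holomorphic_intros ith)
  have hh: "h holomorphic_on ball 0 1" unfolding h_def by (intro holomorphic_intros uh fh)
  have ub: "cmod (u z) \<le> cmod (inverse lam) * (real N * MQ)" if "z \<in> ball 0 1" for z
  proof -
    have "cmod (\<Sum>k<N. poly Q ((\<phi> ^^ k) z)) \<le> (\<Sum>k<N. cmod (poly Q ((\<phi> ^^ k) z)))" by (rule norm_sum)
    also have "\<dots> \<le> (\<Sum>k<N. MQ)" by (intro sum_mono MQ(2) subsetD[OF ball_subset_cball] itb[OF that])
    finally have "cmod (\<Sum>k<N. poly Q ((\<phi> ^^ k) z)) \<le> real N * MQ" by simp
    then show ?thesis unfolding u_def norm_minus_cancel norm_mult by (intro mult_left_mono) auto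
  qed
  have hA: "h \<in> A2 \<beta>"
  proof -
    define a where "a = (cmod (inverse lam) * (real N * MQ))\<^sup>2"
    have "Dn \<beta> h \<le> ennreal a * Dn \<beta> f + ennreal 0 * Dn \<beta> f"
    proof (rule Dn_compare[OF b0 hh fh fh])
      fix z :: complex assume z: "z \<in> ball 0 1"
      have "cmod (h z) \<le> cmod (inverse lam) * (real N * MQ) * cmod (f z)"
        unfolding h_def norm_mult by (intro mult_right_mono ub z) auto
      then have "(cmod (h z))\<^sup>2 \<le> (cmod (inverse lam) * (real N * MQ) * cmod (f z))\<^sup>2"
        by (intro power_mono) auto
      then show "(cmod (h z))\<^sup>2 \<le> a * (cmod (f z))\<^sup>2 + 0 * (cmod (f z))\<^sup>2"
        unfolding a_def by (simp add: power_mult_distrib)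
    qed (auto simp: a_def)
    also have "\<dots> < \<infinity>" using fD by (simp add: ennreal_mult_less_top)
    finally show ?thesis using A2_Dn[OF b0] hh by blast
  qed
  have ident: "h (\<phi> z) - lam * h z - (poly Q z - poly Q \<omega>) * f z = v N z * f z" if z: "z \<in> ball 0 1" for z
  proof -
    define P where "P k = poly Q ((\<phi> ^^ k) z)" for k
    have shift: "poly Q ((\<phi> ^^ k) (\<phi> z)) = P (Suc k)" for k
      unfolding P_def by (simp add: funpow_Suc_right del: funpow.simps)
    have h1: "h (\<phi> z) = - (\<Sum>k<N. P (Suc k)) * f z"
      unfolding h_def u_def using eig[OF z] l0 by (simp add: shift field_simps)
    have h2: "lam * h z = - (\<Sum>k<N. P k) * f z"
      unfolding h_def u_def P_def using l0 by (simp add: field_simps)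
    have tel: "(\<Sum>k<N. P (Suc k)) = (\<Sum>k<N. P k) + P N - P 0"
      using sum_lessThan_telescope[of P N] by (simp add: sum_subtractf algebra_simps)
    have "P 0 = poly Q z" "P N = poly Q ((\<phi> ^^ N) z)" unfolding P_def by simp_all
    then show ?thesis unfolding h1 h2 tel v_def by (simp add: algebra_simps)
  qed
  have "Dn \<beta> (\<lambda>z. h (\<phi> z) - lam * h z - (poly Q z - poly Q \<omega>) * f z) = Dn \<beta> (\<lambda>z. v N z * f z)"
    by (rule Dn_cong) (rule ident)
  then have "Dn \<beta> (\<lambda>z. h (\<phi> z) - lam * h z - (poly Q z - poly Q \<omega>) * f z) < ennreal \<delta>"
    using N by simp
  with hA show "\<exists>h\<in>A2 \<beta>. Dn \<beta> (\<lambda>z. h (\<phi> z) - lam * h z - (poly Q z - poly Q \<omega>) * f z) < ennreal \<delta>"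
    by (rule_tac bexI[of _ h])
qed

lemma G2:
  assumes b0: "\<beta> > -1" and sm: "self_map_disc \<phi>" and F: "F holomorphic_on ball 0 1"
    and appr: "\<And>\<delta>. \<delta> > 0 \<Longrightarrow> \<exists>F'. F' holomorphic_on ball 0 1 \<and> Good \<beta> \<phi> lam F' \<and> Dn \<beta> (\<lambda>z. F' z - F z) < ennreal \<delta>"
  shows "Good \<beta> \<phi> lam F"
  unfolding Good_def
proof (intro allI impI)
  fix \<delta> :: real assume d: "\<delta> > 0"
  have ph: "\<phi> holomorphic_on ball 0 1" and pb: "\<phi> ` ball 0 1 \<subseteq> ball 0 1"
    using sm unfolding self_map_disc_def by auto
  obtain F' where F': "F' holomorphic_on ball 0 1" "Good \<beta> \<phi> lam F'" "Dn \<beta> (\<lambda>z. F' z - F z) < ennreal (\<delta>/4)"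
    using appr[of "\<delta>/4"] d by auto
  obtain h where h: "h \<in> A2 \<beta>" "Dn \<beta> (\<lambda>z. h (\<phi> z) - lam * h z - F' z) < ennreal (\<delta>/4)"
    using F'(2) d unfolding Good_def by (meson zero_less_divide_iff zero_less_numeral)
  have hh: "h holomorphic_on ball 0 1" using h(1) unfolding A2_def by auto
  have hph: "(\<lambda>z. h (\<phi> z)) holomorphic_on ball 0 1"
    using holomorphic_on_compose_gen[OF ph hh pb] by (simp add: o_def)
  have X: "(\<lambda>z. h (\<phi> z) - lam * h z - F' z) holomorphic_on ball 0 1"
    by (intro holomorphic_intros hph hh F')
  have Y: "(\<lambda>z. F' z - F z) holomorphic_on ball 0 1"
    by (intro holomorphic_intros F F')
  have "Dn \<beta> (\<lambda>z. h (\<phi> z) - lam * h z - F z) = Dn \<beta> (\<lambda>z. (h (\<phi> z) - lam * h z - F' z) + (F' z - F z))"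
    by (intro arg_cong[where f = "Dn \<beta>"] ext) (simp add: algebra_simps)
  also have "\<dots> \<le> ennreal 2 * Dn \<beta> (\<lambda>z. h (\<phi> z) - lam * h z - F' z) + ennreal 2 * Dn \<beta> (\<lambda>z. F' z - F z)"
    by (rule Dn_tri[OF b0 X Y])
  also have "\<dots> < ennreal (2 * (\<delta>/4) + 2 * (\<delta>/4))"
    by (rule ennreal_two_sum_less[OF h(2) F'(3)]) (use d in auto)
  also have "2 * (\<delta>/4) + 2 * (\<delta>/4) = \<delta>" by simp
  finally show "\<exists>h\<in>A2 \<beta>. Dn \<beta> (\<lambda>z. h (\<phi> z) - lam * h z - F z) < ennreal \<delta>"
    using h(1) by blast
qed

lemma poly_good:
  fixes f :: "complex \<Rightarrow> complex" and p :: "complex poly"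
  assumes b0: "\<beta> > -1" and sm: "self_map_disc \<phi>" and dw: "denjoy_wolff_point \<phi> \<omega>" and w1: "cmod \<omega> = 1"
    and fA: "f \<in> A2 \<beta>" and eig: "\<And>z. z \<in> ball 0 1 \<Longrightarrow> f (\<phi> z) = lam * f z" and l0: "lam \<noteq> 0"
  shows "Good \<beta> \<phi> lam (\<lambda>z. poly p z * f z)"
proof -
  have fh: "f holomorphic_on ball 0 1" and fD: "Dn \<beta> f < \<infinity>" using fA A2_Dn[OF b0] by auto
  define e where "e z = (1 + cnj \<omega> * z) / 2" for z
  define Qk where "Qk k = p - smult (poly p \<omega>) ([:1/2, cnj \<omega>/2:] ^ k)" for k
  have pQ: "poly (Qk k) z = poly p z - poly p \<omega> * e z ^ k" for k z
  proof -
    have "poly [:1/2, cnj \<omega>/2:] z = e z" unfolding e_def by (simp add: field_simps)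
    then show ?thesis unfolding Qk_def by (simp add: poly_power)
  qed
  have ww: "cnj \<omega> * \<omega> = 1"
    using complex_norm_square[of \<omega>] w1 by (simp add: mult.commute)
  have e1: "e \<omega> = 1" unfolding e_def using ww by simp
  have pQw: "poly (Qk k) \<omega> = 0" for k unfolding pQ e1 by simp
  have eb: "cmod (e z) < 1" if "z \<in> ball 0 1" for z
  proof -
    have "cmod (1 + cnj \<omega> * z) \<le> 1 + cmod (cnj \<omega> * z)" using norm_triangle_ineq[of 1 "cnj \<omega> * z"] by simp
    also have "cmod (cnj \<omega> * z) = cmod z" using w1 by (simp add: norm_mult)
    finally have "cmod (1 + cnj \<omega> * z) < 2" using that by simp
    then show ?thesis unfolding e_def by (simp add: norm_divide)
  qed
  define v where "v k z = - poly p \<omega> * e z ^ k" for k z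
  have vh: "v k holomorphic_on ball 0 1" for k unfolding v_def e_def by (intro holomorphic_intros) auto
  have vb: "cmod (v k z) \<le> cmod (poly p \<omega>)" if "z \<in> ball 0 1" for k z
  proof -
    have "cmod (e z ^ k) \<le> 1" unfolding norm_power using eb[OF that] by (intro power_le_one) auto
    then show ?thesis unfolding v_def norm_mult norm_minus_cancel by (intro mult_left_le) auto
  qed
  have vl: "(\<lambda>k. v k z) \<longlonglongrightarrow> 0" if "z \<in> ball 0 1" for z
  proof -
    have "(\<lambda>k. e z ^ k) \<longlonglongrightarrow> 0" using eb[OF that] by (rule LIMSEQ_power_zero)
    then have "(\<lambda>k. - poly p \<omega> * e z ^ k) \<longlonglongrightarrow> - poly p \<omega> * 0" by (rule tendsto_mult[OF tendsto_const])
    then show ?thesis unfolding v_def by simp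
  qed
  have lim: "(\<lambda>k. Dn \<beta> (\<lambda>z. v k z * f z)) \<longlonglongrightarrow> 0"
    by (rule Dn_dominated[OF b0 fh fD vh vb vl])
  show ?thesis
  proof (rule G2[OF b0 sm])
    show "(\<lambda>z. poly p z * f z) holomorphic_on ball 0 1" by (intro holomorphic_intros fh)
    fix \<delta> :: real assume d: "\<delta> > 0"
    from order_tendstoD(2)[OF lim, of "ennreal \<delta>"] d
    obtain k where k: "Dn \<beta> (\<lambda>z. v k z * f z) < ennreal \<delta>"
      by (auto simp: eventually_sequentially)
    define F' where "F' z = (poly (Qk k) z - poly (Qk k) \<omega>) * f z" for z
    have "F' holomorphic_on ball 0 1" unfolding F'_def by (intro holomorphic_intros fh)
    moreover have "Good \<beta> \<phi> lam F'"
      unfolding F'_def by (rule G1[OF b0 sm dw w1 fA eig l0])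
    moreover have "Dn \<beta> (\<lambda>z. F' z - poly p z * f z) = Dn \<beta> (\<lambda>z. v k z * f z)"
      by (intro arg_cong[where f = "Dn \<beta>"] ext) (simp add: F'_def pQ e1 v_def algebra_simps)
    ultimately show "\<exists>F'. F' holomorphic_on ball 0 1 \<and> Good \<beta> \<phi> lam F' \<and> Dn \<beta> (\<lambda>z. F' z - poly p z * f z) < ennreal \<delta>"
      using k by auto
  qed
qed

theorem theorem2p3:
  fixes \<beta> :: real and \<phi> :: "complex \<Rightarrow> complex" and \<omega> lam :: complex
    and f :: "complex \<Rightarrow> complex"
  assumes "\<beta> > -1"
    and "self_map_disc \<phi>"
    and "denjoy_wolff_point \<phi> \<omega>"
    and "cmod \<omega> = 1"
    and "comp_eigenvector \<beta> \<phi> lam f"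
    and "cyclic_A2 \<beta> f"
  shows "comp_minus_dense_range \<beta> \<phi> lam"
proof -
  note b0 = assms(1) and sm = assms(2) and dw = assms(3) and w1 = assms(4)
  have fA: "f \<in> A2 \<beta>" and eig: "\<And>z. z \<in> ball 0 1 \<Longrightarrow> f (\<phi> z) = lam * f z"
    using assms(5) unfolding comp_eigenvector_def by auto
  have l0: "lam \<noteq> 0" by (rule lam_nonzero[OF sm dw w1 assms(5) b0])
  have fh: "f holomorphic_on ball 0 1" and fD: "Dn \<beta> f < \<infinity>" using fA A2_Dn[OF b0] by auto
  have ph: "\<phi> holomorphic_on ball 0 1" and pb: "\<phi> ` ball 0 1 \<subseteq> ball 0 1"
    using sm unfolding self_map_disc_def by auto
  show ?thesis unfolding comp_minus_dense_range_def
  proof (intro ballI allI impI)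
    fix g :: "complex \<Rightarrow> complex" and \<epsilon> :: real
    assume gA: "g \<in> A2 \<beta>" and e: "\<epsilon> > 0"
    have gh: "g holomorphic_on ball 0 1" and gD: "Dn \<beta> g < \<infinity>" using gA A2_Dn[OF b0] by auto
    obtain p :: "complex poly" where p: "A2_norm \<beta> (\<lambda>z. poly p z * f z - g z) < \<epsilon>/2"
      using assms(6) gA e unfolding cyclic_A2_def by (meson half_gt_zero)
    obtain Mp where Mp: "Mp \<ge> 0" "\<And>z. z \<in> cball 0 1 \<Longrightarrow> cmod (poly p z) \<le> Mp"
      using poly_bounded_disc by blast
    have pfh: "(\<lambda>z. poly p z * f z) holomorphic_on ball 0 1" by (intro holomorphic_intros fh)
    have pfgh: "(\<lambda>z. poly p z * f z - g z) holomorphic_on ball 0 1" by (intro holomorphic_intros fh gh)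
    have pfD: "Dn \<beta> (\<lambda>z. poly p z * f z) < \<infinity>"
    proof -
      have "Dn \<beta> (\<lambda>z. poly p z * f z) \<le> ennreal (Mp\<^sup>2) * Dn \<beta> f + ennreal 0 * Dn \<beta> f"
      proof (rule Dn_compare[OF b0 pfh fh fh])
        fix z :: complex assume z: "z \<in> ball 0 1"
        have "cmod (poly p z * f z) \<le> Mp * cmod (f z)"
          unfolding norm_mult using z by (intro mult_right_mono Mp(2)) auto
        then have "(cmod (poly p z * f z))\<^sup>2 \<le> (Mp * cmod (f z))\<^sup>2" by (intro power_mono) auto
        then show "(cmod (poly p z * f z))\<^sup>2 \<le> Mp\<^sup>2 * (cmod (f z))\<^sup>2 + 0 * (cmod (f z))\<^sup>2"
          by (simp add: power_mult_distrib)
      qed auto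
      also have "\<dots> < \<infinity>" using fD by (simp add: ennreal_mult_less_top)
      finally show ?thesis .
    qed
    have pfgA: "(\<lambda>z. poly p z * f z - g z) \<in> A2 \<beta>"
    proof -
      have "Dn \<beta> (\<lambda>z. poly p z * f z - g z) \<le> ennreal 2 * Dn \<beta> (\<lambda>z. poly p z * f z) + ennreal 2 * Dn \<beta> g"
      proof (rule Dn_compare[OF b0 pfgh pfh gh])
        fix z :: complex
        show "(cmod (poly p z * f z - g z))\<^sup>2 \<le> 2 * (cmod (poly p z * f z))\<^sup>2 + 2 * (cmod (g z))\<^sup>2"
          using sq_tri[of "poly p z * f z" "- g z"] by simp
      qed auto
      also have "\<dots> < \<infinity>" using pfD gD by (simp add: ennreal_mult_less_top)
      finally show ?thesis using A2_Dn[OF b0] pfgh by blast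
    qed
    have A: "Dn \<beta> (\<lambda>z. poly p z * f z - g z) < ennreal ((\<epsilon>/2)\<^sup>2)"
      by (rule Dn_small[OF b0 pfgA _ p]) (use e in simp)
    have "Good \<beta> \<phi> lam (\<lambda>z. poly p z * f z)"
      by (rule poly_good[OF b0 sm dw w1 fA eig l0])
    then obtain h where h: "h \<in> A2 \<beta>" "Dn \<beta> (\<lambda>z. h (\<phi> z) - lam * h z - poly p z * f z) < ennreal ((\<epsilon>/2)\<^sup>2)"
      unfolding Good_def using e by (meson half_gt_zero zero_less_power)
    have hh: "h holomorphic_on ball 0 1" using h(1) unfolding A2_def by auto
    have hph: "(\<lambda>z. h (\<phi> z)) holomorphic_on ball 0 1"
      using holomorphic_on_compose_gen[OF ph hh pb] by (simp add: o_def)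
    have X: "(\<lambda>z. h (\<phi> z) - lam * h z - poly p z * f z) holomorphic_on ball 0 1"
      by (intro holomorphic_intros hph hh fh)
    have Xg: "(\<lambda>z. h (\<phi> z) - lam * h z - g z) holomorphic_on ball 0 1"
      by (intro holomorphic_intros hph hh gh)
    have "Dn \<beta> (\<lambda>z. h (\<phi> z) - lam * h z - g z)
        = Dn \<beta> (\<lambda>z. (h (\<phi> z) - lam * h z - poly p z * f z) + (poly p z * f z - g z))"
      by (intro arg_cong[where f = "Dn \<beta>"] ext) (simp add: algebra_simps)
    also have "\<dots> \<le> ennreal 2 * Dn \<beta> (\<lambda>z. h (\<phi> z) - lam * h z - poly p z * f z) + ennreal 2 * Dn \<beta> (\<lambda>z. poly p z * f z - g z)"
      by (rule Dn_tri[OF b0 X pfgh])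
    also have "\<dots> < ennreal (2 * (\<epsilon>/2)\<^sup>2 + 2 * (\<epsilon>/2)\<^sup>2)"
      by (rule ennreal_two_sum_less[OF h(2) A]) auto
    also have "2 * (\<epsilon>/2)\<^sup>2 + 2 * (\<epsilon>/2)\<^sup>2 = \<epsilon>\<^sup>2" by (simp add: power2_eq_square)
    finally have "Dn \<beta> (\<lambda>z. h (\<phi> z) - lam * h z - g z) < ennreal (\<epsilon>\<^sup>2)" .
    then have "A2_norm \<beta> (\<lambda>z. h (\<phi> z) - lam * h z - g z) < \<epsilon>"
      by (rule norm_small[OF b0 Xg e])
    then show "\<exists>h\<in>A2 \<beta>. A2_norm \<beta> (\<lambda>z. h (\<phi> z) - lam * h z - g z) < \<epsilon>"
      using h(1) by blast
  qed
qed

end
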